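(* Let $(X,d)$ be a complete metric space, $N\in\mathbb{N}\setminus\{0\}$, $\alpha:(X\times X)\times(X\times X)\rightarrow[0,+\infty)$ an $N$--transitive mapping on $X\times X$, and $F:X\times X\rightarrow X$ such that for every $\varepsilon>0$ there exists $\delta(\varepsilon)>0$ for which, for all $(x,y),(u,v)\in X\times X$, \[ \varepsilon\leq\tfrac{d(x,u)+d(y,v)}{2}<\varepsilon+\delta(\varepsilon)\Rightarrow\alpha((x,y),(u,v))\,d(F(x,y),F(u,v))<\varepsilon. \] Suppose that: (B1) for all $(x,y),(u,v)\in X\times X$, $\alpha((x,y),(u,v))\geq1$ implies $\alpha((F(x,y),F(y,x)),(F(u,v),F(v,u)))\geq1$; (B2) there exists $(x_{0},y_{0})\in X\times X$ such that $\alpha((x_{0},y_{0}),(F(x_{0},y_{0}),F(y_{0},x_{0})))\geq1$ and $\alpha((F(y_{0},x_{0}),F(x_{0},y_{0})),(y_{0},x_{0}))\geq1$; (B4) for every sequence $\{(x_{n},y_{n})\}$ in $X\times X$ with $x_{n}\rightarrow x\in X$, $y_{n}\rightarrow y\in X$ and $\alpha((x_{n},y_{n}),(x_{n+1},y_{n+1}))\geq1$, $\alpha((y_{n+1},x_{n+1}),(y_{n},x_{n}))\geq1$ for all $n\in\mathbb{N}$, there exists a subsequence $\{(x_{n(k)},y_{n(k)})\}$ with $\alpha((x_{n(k)},y_{n(k)}),(x,y))\geq1$ and $\alpha((y,x),(y_{n(k)},x_{n(k)}))\geq1$ for all $k\in\mathbb{N}$. Then $F$ has a coupled fixed point, i.e.,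 there exists $(x^{\ast},y^{\ast})\in X\times X$ with $x^{\ast}=F(x^{\ast},y^{\ast})$ and $y^{\ast}=F(y^{\ast},x^{\ast})$.
   Context: $\mathbb{N}$ is the set of non-negative integers. For a set $Z$ and $\gamma:Z\times Z\rightarrow[0,+\infty)$, $\gamma$ is $N$--transitive (on $Z$) if for all $z_0,\dots,z_{N+1}\in Z$ with $\gamma(z_i,z_{i+1})\geq1$ for all $i\in\{0,\dots,N\}$ one has $\gamma(z_0,z_{N+1})\geq1$; here $Z=X\times X$. *)

theory Defs
  imports "HOL-Analysis.Analysis"
begin

definition N_transitive :: "nat \<Rightarrow> ('z \<Rightarrow> 'z \<Rightarrow> real) \<Rightarrow> bool" where
  "N_transitive N \<gamma> \<longleftrightarrow>
     (\<forall>z :: nat \<Rightarrow> 'z. (\<forall>i\<le>N. \<gamma> (z i) (z (Suc i)) \<ge> 1) \<longrightarrow> \<gamma> (z 0) (z (N + 1)) \<ge> 1)"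

end

theory Submission
  imports Defs
begin

theorem corollary2:
  fixes N :: nat
    and \<alpha> :: "('a::complete_space \<times> 'a) \<Rightarrow> ('a \<times> 'a) \<Rightarrow> real"
    and F :: "'a \<Rightarrow> 'a \<Rightarrow> 'a"
  assumes N_pos: "N \<noteq> 0"
    and \<alpha>_nonneg: "\<And>p q. \<alpha> p q \<ge> 0"
    and \<alpha>_trans: "N_transitive N \<alpha>"
    and contr: "\<And>\<epsilon>. \<epsilon> > 0 \<Longrightarrow> \<exists>\<delta>>0. \<forall>x y u v.
        \<epsilon> \<le> (dist x u + dist y v) / 2 \<and> (dist x u + dist y v) / 2 < \<epsilon> + \<delta> \<longrightarrow>
        \<alpha> (x, y) (u, v) * dist (F x y) (F u v) < \<epsilon>"
    and B1: "\<And>x y u v. \<alpha> (x, y) (u, v) \<ge> 1 \<Longrightarrow>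
        \<alpha> (F x y, F y x) (F u v, F v u) \<ge> 1"
    and B2: "\<exists>x0 y0. \<alpha> (x0, y0) (F x0 y0, F y0 x0) \<ge> 1 \<and>
        \<alpha> (F y0 x0, F x0 y0) (y0, x0) \<ge> 1"
    and B4: "\<And>xs ys x y. xs \<longlonglongrightarrow> x \<Longrightarrow> ys \<longlonglongrightarrow> y \<Longrightarrow>
        (\<forall>n. \<alpha> (xs n, ys n) (xs (Suc n), ys (Suc n)) \<ge> 1 \<and>
             \<alpha> (ys (Suc n), xs (Suc n)) (ys n, xs n) \<ge> 1) \<Longrightarrow>
        \<exists>r :: nat \<Rightarrow> nat. strict_mono r \<and> (\<forall>k. \<alpha> (xs (r k), ys (r k)) (x, y) \<ge> 1 \<and>
             \<alpha> (y, x) (ys (r k), xs (r k)) \<ge> 1)"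
  shows "\<exists>x y. x = F x y \<and> y = F y x"
proof -
  define \<rho> :: "'a\<times>'a \<Rightarrow> 'a\<times>'a \<Rightarrow> real" where
    "\<rho> p q = (dist (fst p) (fst q) + dist (snd p) (snd q)) / 2" for p q
  define T where "T p = (F (fst p) (snd p), F (snd p) (fst p))" for p
  define R where "R p q \<longleftrightarrow> \<alpha> p q \<ge> 1 \<and> \<alpha> (snd q, fst q) (snd p, fst p) \<ge> 1" for p q
  have rho_nonneg: "\<rho> p q \<ge> 0" for p q unfolding \<rho>_def by simp
  have rho_sym: "\<rho> p q = \<rho> q p" for p q unfolding \<rho>_def by (simp add: dist_commute)
  have rho_tri: "\<rho> p r \<le> \<rho> p q + \<rho> q r" for p q r
    unfolding \<rho>_def using dist_triangle[of "fst p" "fst r" "fst q"]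
      dist_triangle[of "snd p" "snd r" "snd q"] by (simp add: field_simps)
  have rho_self: "\<rho> p p = 0" for p unfolding \<rho>_def by simp
  have rho_zero: "p = q" if "\<rho> p q = 0" for p q
  proof -
    have "dist (fst p) (fst q) = 0"
      using that zero_le_dist[of "fst p" "fst q"] zero_le_dist[of "snd p" "snd q"]
      unfolding \<rho>_def by (simp add: add_nonneg_eq_0_iff)
    moreover have "dist (snd p) (snd q) = 0"
      using that zero_le_dist[of "fst p" "fst q"] zero_le_dist[of "snd p" "snd q"]
      unfolding \<rho>_def by (simp add: add_nonneg_eq_0_iff)
    ultimately show ?thesis by (simp add: prod_eq_iff)
  qed
  have rho_fst: "dist (fst p) (fst q) \<le> 2 * \<rho> p q" for p q
    unfolding \<rho>_def by simp
  have rho_snd: "dist (snd p) (snd q) \<le> 2 * \<rho> p q" for p q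
    unfolding \<rho>_def by simp
  have MK: "\<exists>\<delta>>0. \<forall>p q. R p q \<and> \<epsilon> \<le> \<rho> p q \<and> \<rho> p q < \<epsilon> + \<delta> \<longrightarrow> \<rho> (T p) (T q) < \<epsilon>"
    if eps: "\<epsilon> > 0" for \<epsilon>
  proof -
    obtain \<delta> where d: "\<delta> > 0" and H: "\<forall>x y u v. \<epsilon> \<le> (dist x u + dist y v) / 2 \<and>
        (dist x u + dist y v) / 2 < \<epsilon> + \<delta> \<longrightarrow> \<alpha> (x, y) (u, v) * dist (F x y) (F u v) < \<epsilon>"
      using contr[OF eps] by blast
    show ?thesis
    proof (intro exI[of _ \<delta>] conjI allI impI d)
      fix p q assume A: "R p q \<and> \<epsilon> \<le> \<rho> p q \<and> \<rho> p q < \<epsilon> + \<delta>"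
      obtain x y where p: "p = (x,y)" by (cases p)
      obtain u v where q: "q = (u,v)" by (cases q)
      have a1: "\<alpha> (x,y) (u,v) \<ge> 1" and a2: "\<alpha> (v,u) (y,x) \<ge> 1" using A p q R_def by auto
      have r: "\<rho> p q = (dist x u + dist y v)/2" using p q \<rho>_def by simp
      have r2: "\<rho> p q = (dist v y + dist u x)/2" using r by (simp add: dist_commute)
      have h1: "\<alpha> (x,y) (u,v) * dist (F x y) (F u v) < \<epsilon>" using H A r by auto
      have h2: "\<alpha> (v,u) (y,x) * dist (F v u) (F y x) < \<epsilon>"
        using H[rule_format, of v y u x] A r2 by auto
      have "1 * dist (F x y) (F u v) \<le> \<alpha> (x,y) (u,v) * dist (F x y) (F u v)"
        using a1 by (intro mult_right_mono) auto
      moreover have "1 * dist (F v u) (F y x) \<le> \<alpha> (v,u) (y,x) * dist (F v u) (F y x)"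
        using a2 by (intro mult_right_mono) auto
      moreover have "\<rho> (T p) (T q) = (dist (F x y) (F u v) + dist (F v u) (F y x)) / 2"
        using p q unfolding \<rho>_def T_def by (simp add: dist_commute)
      ultimately show "\<rho> (T p) (T q) < \<epsilon>" using h1 h2 by simp
    qed
  qed
  have nonexp: "\<rho> (T p) (T q) \<le> \<rho> p q" if "R p q" for p q
  proof (cases "\<rho> p q = 0")
    case True
    then have "p = q" by (rule rho_zero)
    then show ?thesis using rho_self[of "T p"] True by simp
  next
    case False
    then have pos: "\<rho> p q > 0" using rho_nonneg[of p q] by linarith
    from MK[OF pos] obtain \<delta> where dp: "\<delta> > 0" and
      H: "\<forall>p' q'. R p' q' \<and> \<rho> p q \<le> \<rho> p' q' \<and> \<rho> p' q' < \<rho> p q + \<delta> \<longrightarrow> \<rho> (T p') (T q') < \<rho> p q"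
      by blast
    have "\<rho> p q < \<rho> p q + \<delta>" using dp by simp
    then have "\<rho> (T p) (T q) < \<rho> p q" using H that by blast
    then show ?thesis by simp
  qed
  have Rpres: "R (T p) (T q)" if "R p q" for p q
    using that B1 unfolding R_def T_def by (cases p, cases q) auto
  have Rtrans: "R (z 0) (z (N+1))" if "\<forall>i\<le>N. R (z i) (z (Suc i))" for z
  proof -
    have "\<alpha> (z 0) (z (N+1)) \<ge> 1"
      using \<alpha>_trans that unfolding N_transitive_def R_def by blast
    moreover
    define w where "w i = (snd (z (N+1-i)), fst (z (N+1-i)))" for i
    have "\<forall>i\<le>N. \<alpha> (w i) (w (Suc i)) \<ge> 1"
    proof (intro allI impI)
      fix i assume i: "i \<le> N"
      then have "R (z (N - i)) (z (Suc (N - i)))" using that by auto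
      moreover have "Suc (N - i) = N + 1 - i" using i by simp
      ultimately show "\<alpha> (w i) (w (Suc i)) \<ge> 1" unfolding R_def w_def by simp
    qed
    then have "\<alpha> (w 0) (w (N+1)) \<ge> 1"
      using \<alpha>_trans unfolding N_transitive_def by blast
    ultimately show ?thesis unfolding R_def w_def by simp
  qed
  obtain x0 y0 where b2: "\<alpha> (x0, y0) (F x0 y0, F y0 x0) \<ge> 1"
      "\<alpha> (F y0 x0, F x0 y0) (y0, x0) \<ge> 1" using B2 by blast
  define p where "p n = (T ^^ n) (x0, y0)" for n
  have pSuc: "p (Suc n) = T (p n)" for n unfolding p_def by simp
  have padd: "p (s + n) = (T ^^ s) (p n)" for s n unfolding p_def by (simp add: funpow_add)
  have R1: "R (p n) (p (Suc n))" for n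
  proof (induction n)
    case 0
    then show ?case using b2 unfolding R_def p_def T_def by simp
  next
    case (Suc n)
    then show ?case using Rpres pSuc by metis
  qed
  have RN: "R (p n) (p (n + 1 + j * N))" for j n
  proof (induction j arbitrary: n)
    case 0
    then show ?case using R1 by simp
  next
    case (Suc j)
    define z where "z i = (if i \<le> N then p (n + i) else p (n + N + 1 + j * N))" for i
    have "\<forall>i\<le>N. R (z i) (z (Suc i))"
    proof (intro allI impI)
      fix i assume i: "i \<le> N"
      show "R (z i) (z (Suc i))"
      proof (cases "i = N")
        case True
        then show ?thesis using Suc.IH[of "n + N"] unfolding z_def by (simp add: add.assoc)
      next
        case False
        then show ?thesis using R1[of "n+i"] i unfolding z_def by simp
      qed
    qed
    from Rtrans[OF this] show ?case unfolding z_def by (simp add: algebra_simps)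
  qed
  have iterR: "R ((T ^^ s) a) ((T ^^ s) b) \<and> \<rho> ((T ^^ s) a) ((T ^^ s) b) \<le> \<rho> a b"
    if "R a b" for s a b
  proof (induction s)
    case 0
    then show ?case using that by simp
  next
    case (Suc s)
    let ?a = "(T ^^ s) a" and ?b = "(T ^^ s) b"
    have "R (T ?a) (T ?b)" using Suc Rpres by blast
    moreover have "\<rho> (T ?a) (T ?b) \<le> \<rho> ?a ?b" using Suc nonexp by blast
    ultimately show ?case using Suc by simp
  qed
  define c where "c n = \<rho> (p n) (p (Suc n))" for n
  have c_nonneg: "c n \<ge> 0" for n unfolding c_def by (rule rho_nonneg)
  have c_dec: "c (Suc n) \<le> c n" for n
    unfolding c_def using nonexp[OF R1[of n]] pSuc by simp
  have c_mono: "c m \<le> c n" if "n \<le> m" for m n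
  proof -
    have "decseq c" using c_dec by (simp add: decseq_Suc_iff)
    then show ?thesis using that by (rule decseqD)
  qed
  have c_lim: "c \<longlonglongrightarrow> 0"
  proof -
    have "decseq c" using c_dec by (simp add: decseq_Suc_iff)
    then obtain L where L: "c \<longlonglongrightarrow> L" "\<forall>i. L \<le> c i"
      using decseq_convergent[of c 0] c_nonneg by blast
    have L0: "L \<ge> 0" using L(1) c_nonneg by (intro LIMSEQ_le_const) auto
    have "L = 0"
    proof (rule ccontr)
      assume "L \<noteq> 0"
      then have Lp: "L > 0" using L0 by simp
      from MK[OF Lp] obtain \<delta> where d: "\<delta> > 0" and
        H: "\<forall>p q. R p q \<and> L \<le> \<rho> p q \<and> \<rho> p q < L + \<delta> \<longrightarrow> \<rho> (T p) (T q) < L" by blast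
      from L(1) d have "eventually (\<lambda>n. dist (c n) L < \<delta>) sequentially"
        by (rule tendstoD)
      then obtain n where "dist (c n) L < \<delta>" by (meson eventually_sequentially order_refl)
      then have "c n < L + \<delta>" by (simp add: dist_real_def)
      then have "\<rho> (T (p n)) (T (p (Suc n))) < L"
        using H R1[of n] L(2) unfolding c_def by blast
      then have "c (Suc n) < L" unfolding c_def using pSuc by simp
      then show False using L(2) by (meson not_le)
    qed
    then show ?thesis using L(1) by simp
  qed
  have rho_chain: "\<rho> (p n) (p (i + n)) \<le> of_nat i * c n" for i n
  proof (induction i)
    case 0
    then show ?case using rho_self[of "p n"] by simp
  next
    case (Suc i)
    have "\<rho> (p n) (p (Suc i + n)) \<le> \<rho> (p n) (p (i + n)) + c (i + n)"
      unfolding c_def using rho_tri by simp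
    also have "\<dots> \<le> of_nat i * c n + c n" using Suc c_mono[of n "i+n"] by simp
    finally show ?case by (simp add: algebra_simps)
  qed
  have Ncauchy: "\<exists>k. \<forall>m\<ge>k. \<rho> (p k) (p m) < 2 * \<epsilon>" if e: "\<epsilon> > 0" for \<epsilon>
  proof -
    from MK[OF e] obtain \<delta>0 where d0: "\<delta>0 > 0" and
      H0: "\<forall>p q. R p q \<and> \<epsilon> \<le> \<rho> p q \<and> \<rho> p q < \<epsilon> + \<delta>0 \<longrightarrow> \<rho> (T p) (T q) < \<epsilon>" by blast
    define \<delta> where "\<delta> = min \<delta>0 \<epsilon>"
    have d: "\<delta> > 0" "\<delta> \<le> \<delta>0" "\<delta> \<le> \<epsilon>" using d0 e unfolding \<delta>_def by auto
    have Np: "real N > 0" using N_pos by simp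
    have "\<delta> / (2 * real N) > 0" using d Np by simp
    with c_lim have "eventually (\<lambda>n. dist (c n) 0 < \<delta> / (2 * real N)) sequentially"
      by (rule tendstoD)
    then obtain k where "dist (c k) 0 < \<delta> / (2 * real N)"
      unfolding eventually_sequentially by blast
    then have ck: "c k < \<delta> / (2 * real N)" using c_nonneg[of k] by (simp add: dist_real_def)
    have Nck: "real N * c k < \<delta> / 2" using ck Np by (simp add: field_simps)
    have small: "\<rho> (p n) (p (i + n)) < \<delta> / 2" if "k \<le> n" "i \<le> N" for i n
    proof -
      have "\<rho> (p n) (p (i + n)) \<le> of_nat i * c n" by (rule rho_chain)
      also have "\<dots> \<le> real N * c k"
        using that c_mono[of k n] c_nonneg[of n] c_nonneg[of k]
        by (intro mult_mono) auto
      finally show ?thesis using Nck by simp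
    qed
    have A: "\<rho> (p k) (p (k + 1 + j * N)) < \<epsilon> + \<delta> / 2" for j
    proof (induction j)
      case 0
      then show ?case using small[of k 1] N_pos d by (simp add: add.commute)
    next
      case (Suc j)
      define a where "a = k + 1 + j * N"
      have Ra: "R (p k) (p a)" unfolding a_def by (rule RN)
      have eq: "k + 1 + Suc j * N = N + a" unfolding a_def by simp
      have B: "\<rho> (p (N + k)) (p (N + a)) < \<epsilon>"
      proof (cases "\<rho> (p k) (p a) < \<epsilon>")
        case True
        then show ?thesis using iterR[OF Ra, of N] padd by simp
      next
        case False
        have "\<epsilon> \<le> \<rho> (p k) (p a)" "\<rho> (p k) (p a) < \<epsilon> + \<delta>0"
          using False Suc.IH d unfolding a_def by auto
        then have "\<rho> (T (p k)) (T (p a)) < \<epsilon>"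
          using H0 Ra by blast
        then have lt: "\<rho> (p (Suc k)) (p (Suc a)) < \<epsilon>" using pSuc by simp
        have Ra': "R (p (Suc k)) (p (Suc a))" using Rpres[OF Ra] pSuc by simp
        obtain M where M: "N = Suc M" using N_pos not0_implies_Suc by blast
        have "p (N + k) = (T ^^ M) (p (Suc k))" "p (N + a) = (T ^^ M) (p (Suc a))"
          using padd[of M "Suc k"] padd[of M "Suc a"] M by simp_all
        then show ?thesis using iterR[OF Ra', of M] lt by simp
      qed
      have "\<rho> (p k) (p (N + a)) \<le> \<rho> (p k) (p (N + k)) + \<rho> (p (N + k)) (p (N + a))"
        by (rule rho_tri)
      also have "\<dots> < \<delta> / 2 + \<epsilon>" using small[of k N] B by simp
      finally have X: "\<rho> (p k) (p (N + a)) < \<delta> / 2 + \<epsilon>" .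
      show ?case unfolding eq using X by linarith
    qed
    have "\<forall>m\<ge>k. \<rho> (p k) (p m) < 2 * \<epsilon>"
    proof (intro allI impI)
      fix m assume m: "k \<le> m"
      show "\<rho> (p k) (p m) < 2 * \<epsilon>"
      proof (cases "m = k")
        case True
        then show ?thesis using e rho_self[of "p k"] by simp
      next
        case False
        define j where "j = (m - k - 1) div N"
        define r where "r = (m - k - 1) mod N"
        have r: "r \<le> N" unfolding r_def using N_pos by simp
        have dm: "m - k - 1 = j * N + r"
          using div_mult_mod_eq[of "m - k - 1" N] unfolding j_def r_def by simp
        have meq: "m = r + (k + 1 + j * N)" using dm m False by linarith
        have "\<rho> (p k) (p m) \<le> \<rho> (p k) (p (k + 1 + j * N)) + \<rho> (p (k + 1 + j * N)) (p m)"
          by (rule rho_tri)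
        also have "\<dots> < \<epsilon> + \<delta> / 2 + \<delta> / 2"
          using A[of j] small[of "k + 1 + j * N" r] r meq by simp
        finally show ?thesis using d by simp
      qed
    qed
    then show ?thesis by blast
  qed
  have cauchy_gen: "Cauchy (\<lambda>n. g (p n))"
    if g: "\<And>a b. dist (g a) (g b) \<le> 2 * \<rho> a b" for g :: "'a \<times> 'a \<Rightarrow> 'a"
  proof (rule metric_CauchyI)
    fix e :: real assume e: "e > 0"
    then have "e / 8 > 0" by simp
    from Ncauchy[OF this] obtain k where k: "\<forall>m\<ge>k. \<rho> (p k) (p m) < 2 * (e / 8)" by blast
    show "\<exists>M. \<forall>m\<ge>M. \<forall>n\<ge>M. dist (g (p m)) (g (p n)) < e"
    proof (intro exI allI impI)
      fix m n assume "k \<le> m" "k \<le> n"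
      then have "\<rho> (p k) (p m) < e / 4" "\<rho> (p k) (p n) < e / 4" using k by auto
      moreover have "dist (g (p m)) (g (p n)) \<le> dist (g (p m)) (g (p k)) + dist (g (p k)) (g (p n))"
        by (rule dist_triangle)
      moreover have "dist (g (p m)) (g (p k)) \<le> 2 * \<rho> (p k) (p m)"
        using g[of "p m" "p k"] rho_sym by simp
      moreover have "dist (g (p k)) (g (p n)) \<le> 2 * \<rho> (p k) (p n)"
        using g by simp
      ultimately show "dist (g (p m)) (g (p n)) < e" by linarith
    qed
  qed
  define xs where "xs n = fst (p n)" for n
  define ys where "ys n = snd (p n)" for n
  have "Cauchy xs" using cauchy_gen[of fst] rho_fst unfolding xs_def by simp
  then obtain x where x: "xs \<longlonglongrightarrow> x" using Cauchy_convergent_iff convergent_def by blast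
  have "Cauchy ys" using cauchy_gen[of snd] rho_snd unfolding ys_def by simp
  then obtain y where y: "ys \<longlonglongrightarrow> y" using Cauchy_convergent_iff convergent_def by blast
  have pxy: "p n = (xs n, ys n)" for n unfolding xs_def ys_def by simp
  have "\<forall>n. \<alpha> (xs n, ys n) (xs (Suc n), ys (Suc n)) \<ge> 1 \<and>
             \<alpha> (ys (Suc n), xs (Suc n)) (ys n, xs n) \<ge> 1"
    using R1 unfolding R_def xs_def ys_def by simp
  from B4[OF x y this] obtain r :: "nat \<Rightarrow> nat" where r: "strict_mono r"
    and ra: "\<forall>k. \<alpha> (xs (r k), ys (r k)) (x, y) \<ge> 1 \<and> \<alpha> (y, x) (ys (r k), xs (r k)) \<ge> 1"
    by blast
  have Rr: "R (p (r k)) (x, y)" for k using ra pxy unfolding R_def by simp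
  have bnd: "\<rho> (p (Suc (r k))) (T (x, y)) \<le> \<rho> (p (r k)) (x, y)" for k
    using nonexp[OF Rr[of k]] pSuc by simp
  have lim0: "(\<lambda>k. 2 * \<rho> (p (r k)) (x, y)) \<longlonglongrightarrow> 0"
  proof -
    have "(\<lambda>k. dist (xs (r k)) x) \<longlonglongrightarrow> 0"
      using tendsto_dist_iff[THEN iffD1, OF LIMSEQ_subseq_LIMSEQ[OF x r]] by (simp add: o_def)
    moreover have "(\<lambda>k. dist (ys (r k)) y) \<longlonglongrightarrow> 0"
      using tendsto_dist_iff[THEN iffD1, OF LIMSEQ_subseq_LIMSEQ[OF y r]] by (simp add: o_def)
    ultimately have "(\<lambda>k. dist (xs (r k)) x + dist (ys (r k)) y) \<longlonglongrightarrow> 0 + 0"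
      by (rule tendsto_add)
    moreover have eq: "2 * \<rho> (p (r k)) (x, y) = dist (xs (r k)) x + dist (ys (r k)) y" for k
      unfolding \<rho>_def xs_def ys_def by simp
    ultimately show ?thesis by (simp only: eq add_0_right)
  qed
  have xs1: "(\<lambda>k. xs (Suc (r k))) \<longlonglongrightarrow> x"
    using LIMSEQ_subseq_LIMSEQ[OF LIMSEQ_Suc[OF x] r] by (simp add: o_def)
  have ys1: "(\<lambda>k. ys (Suc (r k))) \<longlonglongrightarrow> y"
    using LIMSEQ_subseq_LIMSEQ[OF LIMSEQ_Suc[OF y] r] by (simp add: o_def)
  have xs2: "(\<lambda>k. xs (Suc (r k))) \<longlonglongrightarrow> F x y"
  proof -
    have "(\<lambda>k. dist (xs (Suc (r k))) (F x y)) \<longlonglongrightarrow> 0"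
    proof (rule tendsto_sandwich[OF _ _ tendsto_const lim0])
      show "\<forall>\<^sub>F k in sequentially. 0 \<le> dist (xs (Suc (r k))) (F x y)" by simp
      show "\<forall>\<^sub>F k in sequentially. dist (xs (Suc (r k))) (F x y) \<le> 2 * \<rho> (p (r k)) (x, y)"
      proof (intro always_eventually allI)
        fix k
        have "dist (xs (Suc (r k))) (F x y) \<le> 2 * \<rho> (p (Suc (r k))) (T (x,y))"
          using rho_fst[of "p (Suc (r k))" "T (x,y)"] unfolding xs_def T_def by simp
        then show "dist (xs (Suc (r k))) (F x y) \<le> 2 * \<rho> (p (r k)) (x, y)"
          using bnd[of k] by linarith
      qed
    qed
    then show ?thesis by (rule tendsto_dist_iff[THEN iffD2])
  qed
  have ys2: "(\<lambda>k. ys (Suc (r k))) \<longlonglongrightarrow> F y x"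
  proof -
    have "(\<lambda>k. dist (ys (Suc (r k))) (F y x)) \<longlonglongrightarrow> 0"
    proof (rule tendsto_sandwich[OF _ _ tendsto_const lim0])
      show "\<forall>\<^sub>F k in sequentially. 0 \<le> dist (ys (Suc (r k))) (F y x)" by simp
      show "\<forall>\<^sub>F k in sequentially. dist (ys (Suc (r k))) (F y x) \<le> 2 * \<rho> (p (r k)) (x, y)"
      proof (intro always_eventually allI)
        fix k
        have "dist (ys (Suc (r k))) (F y x) \<le> 2 * \<rho> (p (Suc (r k))) (T (x,y))"
          using rho_snd[of "p (Suc (r k))" "T (x,y)"] unfolding ys_def T_def by simp
        then show "dist (ys (Suc (r k))) (F y x) \<le> 2 * \<rho> (p (r k)) (x, y)"
          using bnd[of k] by linarith
      qed
    qed
    then show ?thesis by (rule tendsto_dist_iff[THEN iffD2])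
  qed
  have "x = F x y" using LIMSEQ_unique[OF xs1 xs2] .
  moreover have "y = F y x" using LIMSEQ_unique[OF ys1 ys2] .
  ultimately show ?thesis by blast
qed

end
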